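(* Let $N\ge2$, $M\ge1$, $q_1,\dots,q_N>0$, and let each $J_k:\mathbb{R}^M\to\mathbb{R}$ be convex and differentiable with $\sum_{k=1}^Nq_kJ_k$ strongly convex, with unique minimizer $w^\star$. Let $A$ be primitive, left-stochastic and balanced with Perron vector $p$, and let $\mu_1,\dots,\mu_N>0$ satisfy $q=\beta\,\mathrm{diag}\{\mu_1,\dots,\mu_N\}p$ for some $\beta>0$. If block vectors $\mathcal{W}^\star=\mathrm{col}\{w_1^\star,\dots,w_N^\star\}\in\mathbb{R}^{NM}$ and $\mathcal{Y}^\star\in\mathbb{R}^{NM}$ exist that satisfy $$\bar{\mathcal{A}}^{\mathsf T}\mathcal{M}\nabla\mathcal{J}^o(\mathcal{W}^\star)+\mathcal{P}^{-1}\mathcal{V}\mathcal{Y}^\star=0,\qquad \mathcal{V}\mathcal{W}^\star=0,$$ then $w_1^\star=w_2^\star=\cdots=w_N^\star=w^\star$.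
   Context: $A=[a_{\ell k}]\in\mathbb{R}^{N\times N}$ is nonnegative, left-stochastic ($A^{\mathsf T}\mathbf{1}_N=\mathbf{1}_N$) and primitive, with Perron vector $p$: $Ap=p$, $\mathbf{1}_N^{\mathsf T}p=1$, $p\succ0$; $P=\mathrm{diag}(p)$, and balanced means $PA^{\mathsf T}=AP$. $q=(q_1,\dots,q_N)^{\mathsf T}$. $\bar A=(I_N+A)/2$. The symmetric positive semidefinite matrix $(P-AP)/2$ has eigendecomposition $U\Sigma U^{\mathsf T}$ and $V=U\Sigma^{1/2}U^{\mathsf T}$. $\bar{\mathcal{A}}=\bar A\otimes I_M$, $\mathcal{P}=P\otimes I_M$, $\mathcal{V}=V\otimes I_M$, $\mathcal{M}=\mathrm{diag}\{\mu_1I_M,\dots,\mu_NI_M\}$, and $\nabla\mathcal{J}^o(\mathcal{W})=\mathrm{col}\{\nabla J_1(w_1),\dots,\nabla J_N(w_N)\}$. *)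

theory Defs
  imports "HOL-Analysis.Analysis"
begin

definition mat_pow :: "real^'n^'n \<Rightarrow> nat \<Rightarrow> real^'n^'n" where
  "mat_pow A k = ((\<lambda>X. A ** X) ^^ k) (mat 1)"

definition primitive_matrix :: "real^'n^'n \<Rightarrow> bool" where
  "primitive_matrix A \<longleftrightarrow> (\<forall>i j. A$i$j \<ge> 0) \<and> (\<exists>k. \<forall>i j. mat_pow A k $i$j > 0)"

definition left_stochastic :: "real^'n^'n \<Rightarrow> bool" where
  "left_stochastic A \<longleftrightarrow> (\<forall>i j. A$i$j \<ge> 0) \<and> transpose A *v (\<chi> i. 1) = (\<chi> i. 1)"

definition diag_mat :: "real^'n \<Rightarrow> real^'n^'n" where
  "diag_mat d = (\<chi> i j. if i = j then d$i else 0)"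

definition strongly_convex_on :: "'a::real_normed_vector set \<Rightarrow> ('a \<Rightarrow> real) \<Rightarrow> bool" where
  "strongly_convex_on S f \<longleftrightarrow> (\<exists>c>0. convex_on S (\<lambda>x. f x - c / 2 * (norm x)^2))"

text \<open>Action of the Kronecker product B \<otimes> I_M on a block vector col{x_1,...,x_N},
  block vectors being represented as functions from the node index to R^M.\<close>
definition kron_I :: "real^'n^'n \<Rightarrow> ('n \<Rightarrow> real^'m) \<Rightarrow> ('n \<Rightarrow> real^'m)" where
  "kron_I B X = (\<lambda>l. \<Sum>k\<in>UNIV. B$l$k *\<^sub>R X k)"

end

theory Submission imports Defs begin

lemma kron_comp: "kron_I B X l $ r = (B *v (\<chi> k. X k $ r)) $ l"
  by (simp add: kron_I_def matrix_vector_mult_def sum_component)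

lemma tangent:
  fixes f :: "'a::real_normed_vector \<Rightarrow> real"
  assumes cv: "convex_on UNIV f" and der: "(f has_derivative D) (at c)"
  shows "f w \<ge> f c + D (w - c)"
proof -
  define d where "d = w - c"
  define g where "g t = f (c + t *\<^sub>R d)" for t :: real
  have lin: "linear D" using der has_derivative_linear by blast
  have "convex_on UNIV g"
  proof (rule convex_onI)
    fix t x y :: real assume t: "0 < t" "t < 1"
    have e: "c + ((1 - t) *\<^sub>R x + t *\<^sub>R y) *\<^sub>R d = (1 - t) *\<^sub>R (c + x *\<^sub>R d) + t *\<^sub>R (c + y *\<^sub>R d)"
      by (simp add: algebra_simps)
    show "g ((1 - t) *\<^sub>R x + t *\<^sub>R y) \<le> (1 - t) * g x + t * g y"
      unfolding g_def e using convex_onD[OF cv, of t] t by simp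
  qed simp
  moreover have "(g has_field_derivative D d) (at 0 within UNIV)"
  proof -
    have i: "((\<lambda>t. c + t *\<^sub>R d) has_derivative (\<lambda>t. t *\<^sub>R d)) (at (0::real))"
      by (auto intro!: derivative_eq_intros)
    have der0: "(f has_derivative D) (at (c + (0::real) *\<^sub>R d))" using der by simp
    have "(g has_derivative (\<lambda>t. D (t *\<^sub>R d))) (at 0)"
      unfolding g_def using has_derivative_compose[OF i der0] by simp
    moreover have "(\<lambda>t. D (t *\<^sub>R d)) = (*) (D d)"
      using linear_scale[OF lin] by (auto simp: mult.commute)
    ultimately show ?thesis by (simp add: has_field_derivative_def)
  qed
  ultimately have "g 1 - g 0 \<ge> D d * (1 - 0)"
    by (intro convex_on_imp_above_tangent[where A=UNIV]) auto
  thus ?thesis by (simp add: g_def d_def)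
qed

lemma perron_const:
  fixes A :: "real^'n^'n"
  assumes prim: "primitive_matrix A" and ls: "left_stochastic A"
    and fx: "transpose A *v x = x"
  shows "x $ i = x $ j"
proof -
  have ind: "transpose (mat_pow A k) *v x = x \<and> transpose (mat_pow A k) *v (\<chi> i. 1) = (\<chi> i. 1)" for k
  proof (induction k)
    case 0 then show ?case by (simp add: mat_pow_def)
  next
    case (Suc k)
    have "mat_pow A (Suc k) = A ** mat_pow A k" by (simp add: mat_pow_def)
    then show ?case using Suc fx ls
      by (simp add: matrix_transpose_mul matrix_vector_mul_assoc[symmetric] left_stochastic_def)
  qed
  obtain k where kp: "\<forall>i j. mat_pow A k $i$j > 0" using prim primitive_matrix_def by blast
  define C where "C = transpose (mat_pow A k)"
  have Cp: "C$i$j > 0" for i j using kp by (simp add: C_def transpose_def)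
  have Cx: "C *v x = x" and C1: "C *v (\<chi> i. 1) = (\<chi> i. 1)" using ind[of k] by (auto simp: C_def)
  define m where "m = Max (range (\<lambda>i. x $ i))"
  have le: "x $ j \<le> m" for j unfolding m_def by (rule Max_ge) auto
  obtain i0 where i0: "x $ i0 = m"
  proof -
    have "m \<in> range (\<lambda>i. x $ i)" unfolding m_def by (rule Max_in) auto
    then show ?thesis using that by auto
  qed
  have s1: "(\<Sum>j\<in>UNIV. C$i0$j * x$j) = m"
    using arg_cong[OF Cx, of "\<lambda>v. v $ i0"] i0 by (simp add: matrix_vector_mult_def)
  have "(\<Sum>j\<in>UNIV. C$i0$j) = 1"
    using arg_cong[OF C1, of "\<lambda>v. v $ i0"] by (simp add: matrix_vector_mult_def)
  then have s2: "(\<Sum>j\<in>UNIV. C$i0$j * m) = m" by (simp add: sum_distrib_right[symmetric])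
  have "(\<Sum>j\<in>UNIV. C$i0$j * (m - x$j)) = 0"
    using s1 s2 by (simp add: right_diff_distrib sum_subtractf)
  moreover have "\<forall>j\<in>UNIV. C$i0$j * (m - x$j) \<ge> 0" using Cp le
    by (simp add: less_imp_le)
  ultimately have "\<forall>j\<in>UNIV. C$i0$j * (m - x$j) = 0"
    by (simp add: sum_nonneg_eq_0_iff)
  then have "x$j = m" for j using Cp[of i0 j] by (metis UNIV_I less_irrefl mult_eq_0_iff eq_iff_diff_eq_0)
  then show ?thesis by simp
qed


theorem lemma2:
  fixes A :: "real^'n^'n"
    and p q \<mu> :: "real^'n"
    and \<beta> :: real
    and J :: "'n \<Rightarrow> real^'m \<Rightarrow> real"
    and gradJ :: "'n \<Rightarrow> real^'m \<Rightarrow> real^'m"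
    and wstar :: "real^'m"
    and U \<Sigma> :: "real^'n^'n"
    and W Y :: "'n \<Rightarrow> real^'m"
  assumes N2: "CARD('n) \<ge> 2"
    and q_pos: "\<forall>k. q$k > 0"
    and J_convex: "\<forall>k. convex_on UNIV (J k)"
    and J_grad: "\<forall>k w. (J k has_derivative (\<lambda>h. gradJ k w \<bullet> h)) (at w)"
    and F_sc: "strongly_convex_on UNIV (\<lambda>w. \<Sum>k\<in>UNIV. q$k * J k w)"
    and wstar_min: "\<forall>w. (\<Sum>k\<in>UNIV. q$k * J k wstar) \<le> (\<Sum>k\<in>UNIV. q$k * J k w)"
    and wstar_unique: "\<forall>w. (\<forall>v. (\<Sum>k\<in>UNIV. q$k * J k w) \<le> (\<Sum>k\<in>UNIV. q$k * J k v)) \<longrightarrow> w = wstar"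
    and A_prim: "primitive_matrix A"
    and A_ls: "left_stochastic A"
    and p_perron: "A *v p = p" "sum (\<lambda>k. p$k) UNIV = 1" "\<forall>k. p$k > 0"
    and A_bal: "diag_mat p ** transpose A = A ** diag_mat p"
    and mu_pos: "\<forall>k. \<mu>$k > 0"
    and beta_pos: "\<beta> > 0"
    and q_eq: "\<forall>k. q$k = \<beta> * \<mu>$k * p$k"
    and U_orth: "orthogonal_matrix U"
    and Sigma_diag: "\<forall>i j. i \<noteq> j \<longrightarrow> \<Sigma>$i$j = 0"
    and Sigma_nonneg: "\<forall>i. \<Sigma>$i$i \<ge> 0"
    and eig: "(1/2) *\<^sub>R (diag_mat p - A ** diag_mat p) = U ** \<Sigma> ** transpose U"
    and eq1: "\<forall>l. kron_I (transpose ((1/2) *\<^sub>R (mat 1 + A))) (\<lambda>k. \<mu>$k *\<^sub>R gradJ k (W k)) l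
                 + (1 / p$l) *\<^sub>R kron_I (U ** (\<chi> i j. if i = j then sqrt (\<Sigma>$i$j) else 0) ** transpose U) Y l = 0"
    and eq2: "\<forall>l. kron_I (U ** (\<chi> i j. if i = j then sqrt (\<Sigma>$i$j) else 0) ** transpose U) W l = 0"
  shows "\<forall>k. W k = wstar"
proof -
  define S :: "real^'n^'n" where "S = (\<chi> i j. if i = j then sqrt (\<Sigma>$i$j) else 0)"
  define V where "V = U ** S ** transpose U"
  define P where "P = diag_mat p"
  have UU: "transpose U ** U = mat 1" using U_orth orthogonal_matrix by blast
  have ST: "transpose S = S" by (simp add: S_def transpose_def vec_eq_iff)
  have VT: "transpose V = V"
    by (simp add: V_def matrix_transpose_mul ST matrix_mul_assoc)
  have SS: "S ** S = \<Sigma>"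
  proof -
    have "(S ** S) $ i $ j = \<Sigma> $ i $ j" for i j
    proof -
      have "(S ** S) $ i $ j = (\<Sum>k\<in>UNIV. (if i = k then sqrt (\<Sigma>$i$k) else 0) * (if k = j then sqrt (\<Sigma>$k$j) else 0))"
        by (simp add: matrix_matrix_mult_def S_def)
      also have "\<dots> = (\<Sum>k\<in>UNIV. if k = i then (if i = j then sqrt (\<Sigma>$i$i) * sqrt (\<Sigma>$i$i) else 0) else 0)"
        by (rule sum.cong) auto
      also have "\<dots> = (if i = j then sqrt (\<Sigma>$i$i) * sqrt (\<Sigma>$i$i) else 0)"
        by simp
      also have "\<dots> = \<Sigma> $ i $ j" using Sigma_nonneg Sigma_diag by auto
      finally show ?thesis .
    qed
    then show ?thesis by (simp add: vec_eq_iff)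
  qed
  have VV: "V ** V = (1/2) *\<^sub>R (P - A ** P)"
  proof -
    have "V ** V = U ** S ** (transpose U ** U) ** S ** transpose U"
      by (simp add: V_def matrix_mul_assoc)
    also have "\<dots> = U ** \<Sigma> ** transpose U" by (simp add: UU SS[symmetric] matrix_mul_assoc)
    finally show ?thesis using eig by (simp add: P_def)
  qed
  have Pv: "P *v z = (\<chi> i. p$i * z$i)" for z
    by (simp add: P_def diag_mat_def matrix_vector_mult_def vec_eq_iff if_distrib[of "\<lambda>a. a * _"] cong: if_cong)
  have VVv: "V *v (V *v z) = (1/2) *\<^sub>R (P *v z - A *v (P *v z))" for z
    by (simp add: matrix_vector_mul_assoc VV scaleR_matrix_vector_assoc[symmetric] matrix_vector_mult_diff_rdistrib)
  have cons: "W i $ r = W j $ r" for i j r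
  proof -
    define x where "x = (\<chi> k. W k $ r)"
    have Vx: "V *v x = 0"
    proof -
      have "(V *v x) $ l = 0" for l
        using arg_cong[OF spec[OF eq2, of l], of "\<lambda>v. v $ r"]
        by (simp add: kron_comp x_def V_def S_def)
      then show ?thesis by (simp add: vec_eq_iff)
    qed
    have "(1/2) *\<^sub>R (P *v x - A *v (P *v x)) = 0" using VVv[of x] Vx by simp
    then have "P *v x = A *v (P *v x)" by simp
    also have "A *v (P *v x) = P *v (transpose A *v x)"
      by (simp only: matrix_vector_mul_assoc P_def A_bal)
    finally have "p$k * x$k = p$k * (transpose A *v x)$k" for k
      unfolding Pv by (simp add: vec_eq_iff)
    then have "transpose A *v x = x" using p_perron(3) by (simp add: vec_eq_iff) (metis less_irrefl)
    from perron_const[OF A_prim A_ls this] show ?thesis by (simp add: x_def)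
  qed
  obtain k0 :: 'n where True by blast
  define c where "c = W k0"
  have Wc: "W k = c" for k using cons by (simp add: c_def vec_eq_iff)
  have one: "V *v (\<chi> i. 1) = 0"
  proof -
    have "P *v (\<chi> i. 1) = p" by (simp add: Pv vec_eq_iff)
    then have "V *v (V *v (\<chi> i. 1)) = 0" using VVv p_perron(1) by simp
    then have "(V *v (\<chi> i. 1)) \<bullet> (V *v (\<chi> i. 1)) = 0"
      by (metis dot_lmul_matrix transpose_matrix_vector VT inner_zero_left inner_commute)
    then show ?thesis by simp
  qed
  have Abp: "(1/2) *\<^sub>R (mat 1 + A) *v p = p"
    using p_perron(1) by (simp add: scaleR_matrix_vector_assoc[symmetric] matrix_vector_mult_add_rdistrib)
  have G0: "(\<Sum>k\<in>UNIV. q$k *\<^sub>R gradJ k c) = 0"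
  proof -
    have "(\<Sum>k\<in>UNIV. q$k *\<^sub>R gradJ k c) $ r = 0" for r
    proof -
      define g where "g = (\<chi> k. \<mu>$k * gradJ k c $ r)"
      define y where "y = (\<chi> k. Y k $ r)"
      define Ab where "Ab = (1/2) *\<^sub>R (mat 1 + A)"
      have e: "(transpose Ab *v g)$l + (1 / p$l) * (V *v y)$l = 0" for l
        using arg_cong[OF spec[OF eq1, of l], of "\<lambda>v. v $ r"]
        by (simp add: kron_comp g_def y_def V_def S_def Ab_def Wc)
      have e2: "p$l * (transpose Ab *v g)$l + (V *v y)$l = 0" for l
      proof -
        have "p$l * (transpose Ab *v g)$l + (V *v y)$l = p$l * ((transpose Ab *v g)$l + (1 / p$l) * (V *v y)$l)"
          using p_perron(3)[rule_format, of l] by (simp add: algebra_simps)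
        then show ?thesis using e[of l] by simp
      qed
      have "p \<bullet> (transpose Ab *v g) + (\<chi> i. 1) \<bullet> (V *v y) = 0"
        using e2 by (simp add: inner_vec_def sum.distrib[symmetric])
      moreover have "p \<bullet> (transpose Ab *v g) = g \<bullet> p"
        by (metis Abp Ab_def dot_lmul_matrix inner_commute transpose_matrix_vector)
      moreover have "(\<chi> i. 1) \<bullet> (V *v y) = 0"
        by (metis one VT dot_lmul_matrix transpose_matrix_vector inner_zero_left)
      ultimately have "g \<bullet> p = 0" by simp
      then have "(\<Sum>k\<in>UNIV. \<mu>$k * gradJ k c $ r * p$k) = 0"
        by (simp add: inner_vec_def g_def)
      then have "\<beta> * (\<Sum>k\<in>UNIV. \<mu>$k * gradJ k c $ r * p$k) = 0" by simp
      then show ?thesis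
        by (simp add: sum_component q_eq sum_distrib_left mult_ac)
    qed
    then show ?thesis by (simp add: vec_eq_iff)
  qed
  have "(\<Sum>k\<in>UNIV. q$k * J k c) \<le> (\<Sum>k\<in>UNIV. q$k * J k v)" for v
  proof -
    have t: "J k v \<ge> J k c + gradJ k c \<bullet> (v - c)" for k
      using tangent[OF spec[OF J_convex, of k] J_grad[rule_format, of k c]] by simp
    have "(\<Sum>k\<in>UNIV. q$k * J k c) = (\<Sum>k\<in>UNIV. q$k * J k c) + (\<Sum>k\<in>UNIV. q$k *\<^sub>R gradJ k c) \<bullet> (v - c)"
      using G0 by simp
    also have "\<dots> = (\<Sum>k\<in>UNIV. q$k * (J k c + gradJ k c \<bullet> (v - c)))"
      by (simp add: inner_sum_left sum.distrib distrib_left)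
    also have "\<dots> \<le> (\<Sum>k\<in>UNIV. q$k * J k v)"
      by (rule sum_mono) (use t q_pos in \<open>simp add: less_imp_le mult_left_mono\<close>)
    finally show ?thesis .
  qed
  then have "c = wstar" using wstar_unique by blast
  then show ?thesis using Wc by simp
qed

end
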